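(* Let $n\ge 2$ be even and let $\pi=(\pi_1,\ldots,\pi_n)$ be a permutation of $\{1,\ldots,n\}$. Let $\Delta(\pi)=\sum_{i=1}^{n-1}|\pi_{i+1}-\pi_i|$ and $\Delta^*_n=\max\{\Delta(\sigma):\sigma \text{ a permutation of }\{1,\ldots,n\}\}$. Then $\Delta(\pi)=\Delta^*_n$ if and only if $\pi$ is mid-alternating and $\{\pi_1,\pi_n\}=\{\frac n2,\frac n2+1\}$. Moreover, $\Delta^*_n=(n^2-2)/2$.
   Context: For $n=2k$ even, a permutation $\pi$ of $\{1,\ldots,n\}$ is mid-alternating if for every $i<n$ either ($\pi_i\le k$ and $\pi_{i+1}\ge k+1$) or ($\pi_i\ge k+1$ and $\pi_{i+1}\le k$). *)

theory Defs
  imports Main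
begin

text \<open>A permutation of {1..n} is represented as a function p :: nat \<Rightarrow> nat with
  bij_betw p {1..n} {1..n}; its one-line notation is (p 1, ..., p n).\<close>

definition is_perm :: "nat \<Rightarrow> (nat \<Rightarrow> nat) \<Rightarrow> bool" where
  "is_perm n p \<longleftrightarrow> bij_betw p {1..n} {1..n}"

definition Delta :: "nat \<Rightarrow> (nat \<Rightarrow> nat) \<Rightarrow> int" where
  "Delta n p = (\<Sum>i=1..n-1. \<bar>int (p (i+1)) - int (p i)\<bar>)"

definition Delta_star :: "nat \<Rightarrow> int" where
  "Delta_star n = Max {Delta n s | s. is_perm n s}"

definition mid_alternating :: "nat \<Rightarrow> (nat \<Rightarrow> nat) \<Rightarrow> bool" where
  "mid_alternating n p \<longleftrightarrow> (let k = n div 2 in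
     \<forall>i. 1 \<le> i \<and> i < n \<longrightarrow>
       ((p i \<le> k \<and> p (i+1) \<ge> k+1) \<or> (p i \<ge> k+1 \<and> p (i+1) \<le> k)))"

end

theory Submission
  imports Defs
begin

definition FF :: "nat \<Rightarrow> nat \<Rightarrow> int" where
  "FF k x = \<bar>2 * int x - 2 * int k - 1\<bar>"

lemma ends_sum:
  fixes g :: "nat \<Rightarrow> int"
  shows "(\<Sum>i=1..m. g i + g (i+1)) = 2 * (\<Sum>i=1..m+1. g i) - g 1 - g (m+1)"
proof (induction m)
  case 0 then show ?case by simp
next
  case (Suc m)
  have "(\<Sum>i=1..Suc m. g i + g (i+1)) = (\<Sum>i=1..m. g i + g (i+1)) + g (m+1) + g (m+2)"
    by simp
  also have "\<dots> = 2 * (\<Sum>i=1..m+1. g i) - g 1 - g (m+1) + g (m+1) + g (m+2)"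
    using Suc by simp
  also have "\<dots> = 2 * (\<Sum>i=1..Suc m+1. g i) - g 1 - g (Suc m+1)"
    by simp
  finally show ?case .
qed

lemma sumF_low:
  "m \<le> k \<Longrightarrow> (\<Sum>x=1..m. FF k x) = int m * (2 * int k - int m)"
proof (induction m)
  case 0 then show ?case by simp
next
  case (Suc m)
  then have "(\<Sum>x=1..Suc m. FF k x) = int m * (2 * int k - int m) + FF k (Suc m)"
    by simp
  also have "FF k (Suc m) = 2 * int k + 1 - 2 * int (Suc m)"
    using Suc.prems by (simp add: FF_def)
  finally show ?case by (simp add: algebra_simps)
qed

lemma sumF_high:
  assumes "k \<le> m"
  shows "(\<Sum>x=1..m. FF k x) = (int k)^2 + (int m - int k)^2"
  using assms
proof (induction m rule: dec_induct)
  case base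
  then show ?case using sumF_low[of k k] by (simp add: power2_eq_square algebra_simps)
next
  case (step m)
  then have "(\<Sum>x=1..Suc m. FF k x) = (int k)^2 + (int m - int k)^2 + FF k (Suc m)"
    by simp
  also have "FF k (Suc m) = 2 * int (Suc m) - 2 * int k - 1"
    using step by (simp add: FF_def)
  finally show ?case by (simp add: algebra_simps power2_eq_square)
qed

lemma sumF_all: "(\<Sum>x=1..2*k. FF k x) = 2 * (int k)^2"
  using sumF_high[of k "2*k"] by (simp add: power2_eq_square)

lemma edge_E:
  fixes a b k :: nat
  shows "FF k a + FF k b - 2 * \<bar>int b - int a\<bar> \<ge> 0"
    and "FF k a + FF k b - 2 * \<bar>int b - int a\<bar> = 0 \<longleftrightarrow>
          ((a \<le> k \<and> b \<ge> k+1) \<or> (a \<ge> k+1 \<and> b \<le> k))"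
  unfolding FF_def by arith+

lemma F_ge1: "FF k x \<ge> 1"
  unfolding FF_def by arith

lemma F_eq1: "FF k x = 1 \<longleftrightarrow> x = k \<or> x = k+1"
  unfolding FF_def by arith


lemma main_identity:
  assumes n: "n = 2*k" "k \<ge> 1" and p: "is_perm n p"
  shows "2 * Delta n p = 4 * (int k)^2 - (FF k (p 1) + FF k (p n))
          - (\<Sum>i=1..n-1. FF k (p i) + FF k (p (i+1)) - 2 * \<bar>int (p (i+1)) - int (p i)\<bar>)"
proof -
  have bij: "bij_betw p {1..n} {1..n}" using p unfolding is_perm_def .
  have s1: "(\<Sum>i=1..n. FF k (p i)) = 2 * (int k)^2"
    using sum.reindex_bij_betw[OF bij, of "FF k"] sumF_all[of k] n by simp
  have s2: "(\<Sum>i=1..n-1. FF k (p i) + FF k (p (i+1))) = 2 * (\<Sum>i=1..n. FF k (p i)) - FF k (p 1) - FF k (p n)"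
    using ends_sum[of "\<lambda>i. FF k (p i)" "n-1"] n by simp
  have "(\<Sum>i=1..n-1. FF k (p i) + FF k (p (i+1)) - 2 * \<bar>int (p (i+1)) - int (p i)\<bar>)
     = (\<Sum>i=1..n-1. FF k (p i) + FF k (p (i+1))) - 2 * Delta n p"
    unfolding Delta_def by (simp add: sum_subtractf sum_distrib_left)
  then show ?thesis using s1 s2 by simp
qed

lemma main_bound:
  assumes n: "n = 2*k" "k \<ge> 1" and p: "is_perm n p"
  shows "2 * Delta n p \<le> 4 * (int k)^2 - 2"
    and "2 * Delta n p = 4 * (int k)^2 - 2 \<longleftrightarrow>
          mid_alternating n p \<and> {p 1, p n} = {k, k + 1}"
proof -
  let ?E = "\<lambda>i. FF k (p i) + FF k (p (i+1)) - 2 * \<bar>int (p (i+1)) - int (p i)\<bar>"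
  have id: "2 * Delta n p = 4 * (int k)^2 - (FF k (p 1) + FF k (p n)) - (\<Sum>i=1..n-1. ?E i)"
    using main_identity[OF assms] .
  have Enn: "\<And>i. ?E i \<ge> 0" using edge_E(1) by blast
  have sE: "(\<Sum>i=1..n-1. ?E i) \<ge> 0" using Enn by (simp add: sum_nonneg)
  have f1: "FF k (p 1) \<ge> 1" "FF k (p n) \<ge> 1" using F_ge1 by auto
  show "2 * Delta n p \<le> 4 * (int k)^2 - 2" using id sE f1 by linarith
  have bij: "bij_betw p {1..n} {1..n}" using p unfolding is_perm_def .
  have neq: "p 1 \<noteq> p n"
  proof
    assume "p 1 = p n"
    moreover have "(1::nat) \<in> {1..n}" "n \<in> {1..n}" using n by auto
    ultimately have "1 = n" using inj_onD[OF bij_betw_imp_inj_on[OF bij]] by blast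
    then show False using n by simp
  qed
  have "2 * Delta n p = 4 * (int k)^2 - 2 \<longleftrightarrow>
        (\<Sum>i=1..n-1. ?E i) = 0 \<and> FF k (p 1) = 1 \<and> FF k (p n) = 1"
    using id sE f1 by linarith
  also have "(\<Sum>i=1..n-1. ?E i) = 0 \<longleftrightarrow> (\<forall>i\<in>{1..n-1}. ?E i = 0)"
    by (meson Enn finite_atLeastAtMost sum_nonneg_eq_0_iff)
  also have "(\<forall>i\<in>{1..n-1}. ?E i = 0) \<longleftrightarrow> mid_alternating n p"
  proof -
    have dk: "n div 2 = k" using n by simp
    have rng: "\<And>i. i \<in> {1..n-1} \<longleftrightarrow> 1 \<le> i \<and> i < n" using n by auto
    show ?thesis
      unfolding mid_alternating_def Let_def edge_E(2) dk Ball_def rng by blast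
  qed
  also have "FF k (p 1) = 1 \<and> FF k (p n) = 1 \<longleftrightarrow> {p 1, p n} = {k, k + 1}"
    unfolding F_eq1 using neq by (auto simp: doubleton_eq_iff)
  finally show "2 * Delta n p = 4 * (int k)^2 - 2 \<longleftrightarrow>
          mid_alternating n p \<and> {p 1, p n} = {k, k + 1}" by simp
qed

definition wit :: "nat \<Rightarrow> nat \<Rightarrow> nat" where
  "wit k i = (if odd i then k + 1 - (i+1) div 2 else 2*k + 1 - i div 2)"

lemma wit_odd:
  assumes "odd i" "1 \<le> i" "i \<le> 2*k"
  shows "1 \<le> wit k i \<and> wit k i \<le> k \<and> i = 2*(k+1 - wit k i) - 1"
proof -
  obtain j where j: "i = 2*j+1" using assms(1) by (elim oddE)
  have "(i+1) div 2 = j+1" using j by simp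
  then have "wit k i = k - j" using assms(1) by (simp add: wit_def)
  then show ?thesis using j assms by auto
qed

lemma wit_even:
  assumes "even i" "1 \<le> i" "i \<le> 2*k"
  shows "k + 1 \<le> wit k i \<and> wit k i \<le> 2*k \<and> i = 2*(2*k+1 - wit k i)"
proof -
  obtain j where j: "i = 2*j" using assms(1) by (elim evenE)
  have "i div 2 = j" using j by simp
  then have "wit k i = 2*k + 1 - j" using assms(1) by (simp add: wit_def)
  then show ?thesis using j assms by auto
qed

lemma wit_perm:
  assumes "n = 2*k"
  shows "is_perm n (wit k)"
proof -
  have img: "wit k ` {1..n} \<subseteq> {1..n}"
  proof
    fix y assume "y \<in> wit k ` {1..n}"
    then obtain i where "i \<in> {1..n}" "y = wit k i" by auto
    then show "y \<in> {1..n}" using wit_odd[of i k] wit_even[of i k] assms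
      by (cases "even i") auto
  qed
  have inj: "inj_on (wit k) {1..n}"
    unfolding inj_on_def
  proof (intro ballI impI)
    fix i j assume ij: "i \<in> {1..n}" "j \<in> {1..n}" "wit k i = wit k j"
    then show "i = j" using assms wit_odd[of i k] wit_even[of i k] wit_odd[of j k] wit_even[of j k]
      by (cases "even i"; cases "even j") auto
  qed
  have "wit k ` {1..n} = {1..n}"
    using endo_inj_surj[OF _ img inj] by simp
  then show ?thesis using inj unfolding is_perm_def bij_betw_def by simp
qed

lemma wit_good:
  assumes "n = 2*k" "k \<ge> 1"
  shows "mid_alternating n (wit k) \<and> {wit k 1, wit k n} = {k, k + 1}"
proof
  show "mid_alternating n (wit k)"
    unfolding mid_alternating_def Let_def
  proof (intro allI impI)
    fix i assume i: "1 \<le> i \<and> i < n"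
    show "(wit k i \<le> n div 2 \<and> n div 2 + 1 \<le> wit k (i + 1)) \<or> (n div 2 + 1 \<le> wit k i \<and> wit k (i + 1) \<le> n div 2)"
      using i assms wit_odd[of i k] wit_even[of i k] wit_odd[of "i+1" k] wit_even[of "i+1" k]
      by (cases "even i") auto
  qed
  show "{wit k 1, wit k n} = {k, k + 1}"
    using assms by (auto simp: wit_def)
qed

lemma Delta_nonneg: "Delta n p \<ge> 0"
  unfolding Delta_def by (simp add: sum_nonneg)

theorem theorem3p3:
  fixes n :: nat and p :: "nat \<Rightarrow> nat"
  assumes "n \<ge> 2" and "even n" and "is_perm n p"
  shows "(Delta n p = Delta_star n \<longleftrightarrow>
            mid_alternating n p \<and> {p 1, p n} = {n div 2, n div 2 + 1})
         \<and> 2 * Delta_star n = int n ^ 2 - 2"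
proof -
  obtain k where n: "n = 2*k" using assms(2) by (elim evenE)
  have k1: "k \<ge> 1" using n assms(1) by simp
  have dk: "n div 2 = k" using n by simp
  have W: "2 * Delta n (wit k) = 4 * (int k)^2 - 2"
    using main_bound(2)[OF n k1 wit_perm[OF n]] wit_good[OF n k1] by blast
  let ?A = "{Delta n s | s. is_perm n s}"
  have sub: "?A \<subseteq> {0..2 * (int k)^2 - 1}"
  proof
    fix x assume "x \<in> ?A"
    then obtain s where s: "is_perm n s" "x = Delta n s" by blast
    have "2 * x \<le> 4 * (int k)^2 - 2" using main_bound(1)[OF n k1 s(1)] s(2) by simp
    then show "x \<in> {0..2 * (int k)^2 - 1}" using Delta_nonneg[of n s] s(2) by simp
  qed
  have fin: "finite ?A" using finite_subset[OF sub] by simp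
  have DS: "Delta_star n = 2 * (int k)^2 - 1"
    unfolding Delta_star_def
  proof (rule Max_eqI[OF fin])
    fix y assume "y \<in> ?A" then show "y \<le> 2 * (int k)^2 - 1" using sub by auto
  next
    show "2 * (int k)^2 - 1 \<in> ?A" using W wit_perm[OF n] by force
  qed
  have "Delta n p = Delta_star n \<longleftrightarrow> 2 * Delta n p = 4 * (int k)^2 - 2"
    using DS by linarith
  also have "\<dots> \<longleftrightarrow> mid_alternating n p \<and> {p 1, p n} = {k, k + 1}"
    using main_bound(2)[OF n k1 assms(3)] .
  finally have A: "Delta n p = Delta_star n \<longleftrightarrow>
            mid_alternating n p \<and> {p 1, p n} = {n div 2, n div 2 + 1}" unfolding dk .
  have B: "2 * Delta_star n = int n ^ 2 - 2" using DS n by (simp add: power2_eq_square)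
  show ?thesis using A B by blast
qed

end
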